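(* Let $p\in[1,\infty]$ and $d\in\mathbb N$. For $n\in\mathbb N$ let $s_n\in\mathbb N$ and let $\mathbf w^{(n)}=(\mathbf w^{(n)}_0,\dots,\mathbf w^{(n)}_{s_n})\in\mathbb R^{s_n+1}$ be filter masks, let $m_0:=d$, $m_n:=m_{n-1}+s_n$, and let $\mathbf b_n\in\mathbb R^{m_n}$ be bias vectors. Suppose $\sum_{n=1}^\infty\|\mathbf b_n\|_p<\infty$, the infinite product $\prod_{n=1}^\infty\mathbf w^{(n)}_0$ converges to a nonzero limit (in particular all $\mathbf w^{(n)}_0\neq0$), and $$\sum_{n=1}^\infty\frac{\sum_{j=1}^{s_n}|\mathbf w^{(n)}_j|}{|\mathbf w^{(n)}_0|}<\infty.$$ Then the deep ReLU convolutional neural networks $x^{(n)}$ converge pointwise on $[0,1]^d$, i.e. for each $x\in[0,1]^d$ the sequence $\tilde x^{(n)}$ converges in $\ell^p$.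
   Context: $\sigma(t)=\max(t,0)$ applied componentwise. For $\mathbf x\in\mathbb R^m$ and $\mathbf w=(\mathbf w_0,\dots,\mathbf w_s)$, the convolution $\mathbf x*\mathbf w\in\mathbb R^{m+s}$ has entries $(\mathbf x*\mathbf w)_i=\sum_{j=\max(0,i-m)}^{\min(i-1,s)}\mathbf w_j\mathbf x_{i-j}$, $1\le i\le m+s$; equivalently $\mathbf x*\mathbf w=\mathbf W\mathbf x$ with $\mathbf W\in\mathbb R^{(m+s)\times m}$, $\mathbf W_{jk}=\mathbf w_{j-k}$ if $0\le j-k\le s$ and $0$ otherwise. The CNN is defined by $x^{(0)}:=x\in[0,1]^d$ and $x^{(n)}:=\sigma(x^{(n-1)}*\mathbf w^{(n)}+\mathbf b_n)\in\mathbb R^{m_n}$; $\tilde x^{(n)}\in\ell^p$ denotes $x^{(n)}$ extended by zeros beyond its first $m_n$ entries. *)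

theory Defs
  imports "HOL-Analysis.Analysis"
begin

text \<open>Vectors in R^m are represented as functions nat => real, indexed 1..m,
  and identified with their zero extension (entries outside 1..m are 0).\<close>

definition relu :: "real \<Rightarrow> real" where
  "relu t = max t 0"

definition lp_member :: "ereal \<Rightarrow> (nat \<Rightarrow> real) \<Rightarrow> bool" where
  "lp_member p x = (if p = \<infinity> then bounded (range (\<lambda>i. \<bar>x i\<bar>))
                    else summable (\<lambda>i. \<bar>x i\<bar> powr real_of_ereal p))"

definition lp_norm :: "ereal \<Rightarrow> (nat \<Rightarrow> real) \<Rightarrow> real" where
  "lp_norm p x = (if p = \<infinity> then (SUP i. \<bar>x i\<bar>)
                  else (\<Sum>i. \<bar>x i\<bar> powr real_of_ereal p) powr (1 / real_of_ereal p))"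

definition restrict_vec :: "nat \<Rightarrow> (nat \<Rightarrow> real) \<Rightarrow> nat \<Rightarrow> real" where
  "restrict_vec m x i = (if 1 \<le> i \<and> i \<le> m then x i else 0)"

text \<open>(x * w)_i = sum_{j=max(0,i-m)}^{min(i-1,s)} w_j x_{i-j}, for 1 <= i <= m+s\<close>
definition conv :: "nat \<Rightarrow> (nat \<Rightarrow> real) \<Rightarrow> nat \<Rightarrow> (nat \<Rightarrow> real) \<Rightarrow> nat \<Rightarrow> real" where
  "conv m x s w i = (if 1 \<le> i \<and> i \<le> m + s
      then (\<Sum>j\<in>{i - m .. min (i - 1) s}. w j * x (i - j)) else 0)"

primrec width :: "nat \<Rightarrow> (nat \<Rightarrow> nat) \<Rightarrow> nat \<Rightarrow> nat" where
  "width d s 0 = d"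
| "width d s (Suc n) = width d s n + s (Suc n)"

primrec cnn :: "nat \<Rightarrow> (nat \<Rightarrow> nat) \<Rightarrow> (nat \<Rightarrow> nat \<Rightarrow> real) \<Rightarrow> (nat \<Rightarrow> nat \<Rightarrow> real)
                 \<Rightarrow> (nat \<Rightarrow> real) \<Rightarrow> nat \<Rightarrow> nat \<Rightarrow> real" where
  "cnn d s w b x 0 = restrict_vec d x"
| "cnn d s w b x (Suc n) = restrict_vec (width d s (Suc n))
     (\<lambda>i. relu (conv (width d s n) (cnn d s w b x n) (s (Suc n)) (w (Suc n)) i + b (Suc n) i))"

end

theory Submission
  imports Defs
begin


definition Bnd :: "ereal \<Rightarrow> real \<Rightarrow> (nat \<Rightarrow> real) \<Rightarrow> bool" where
  "Bnd p C f = (0 \<le> C \<and> (if p = \<infinity> then (\<forall>i. \<bar>f i\<bar> \<le> C)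
      else (\<forall>K. (\<Sum>i<K. \<bar>f i\<bar> powr real_of_ereal p) \<le> C powr real_of_ereal p)))"

lemma q_ge1: assumes "1 \<le> p" "p \<noteq> \<infinity>" shows "1 \<le> real_of_ereal p"
  using assms by (cases p) auto

lemma Bnd_imp:
  assumes hp: "1 \<le> p" and B: "Bnd p C f"
  shows "lp_member p f \<and> lp_norm p f \<le> C"
proof (cases "p = \<infinity>")
  case True
  then have C: "0 \<le> C" "\<And>i. \<bar>f i\<bar> \<le> C" using B by (auto simp: Bnd_def)
  have "bounded (range (\<lambda>i. \<bar>f i\<bar>))"
    unfolding bounded_iff using C by auto
  moreover have "(SUP i. \<bar>f i\<bar>) \<le> C" by (rule cSUP_least) (auto simp: C)
  ultimately show ?thesis using True by (simp add: lp_member_def lp_norm_def)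
next
  case False
  define q where "q = real_of_ereal p"
  have q: "1 \<le> q" using q_ge1[OF hp False] q_def by simp
  have C: "0 \<le> C" "\<And>K. (\<Sum>i<K. \<bar>f i\<bar> powr q) \<le> C powr q" using B False by (auto simp: Bnd_def q_def)
  have sm: "summable (\<lambda>i. \<bar>f i\<bar> powr q)"
    by (rule summableI_nonneg_bounded[where x="C powr q"]) (auto simp: C)
  have le: "(\<Sum>i. \<bar>f i\<bar> powr q) \<le> C powr q" by (rule suminf_le_const[OF sm C(2)])
  have "(\<Sum>i. \<bar>f i\<bar> powr q) powr (1/q) \<le> (C powr q) powr (1/q)"
    by (rule powr_mono2) (use q le in \<open>auto intro: suminf_nonneg sm\<close>)
  also have "\<dots> = C" using q C by (simp add: powr_powr)
  finally show ?thesis using False sm by (simp add: lp_member_def lp_norm_def q_def)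
qed

lemma imp_Bnd:
  assumes hp: "1 \<le> p" and M: "lp_member p f" and le: "lp_norm p f \<le> C"
  shows "Bnd p C f"
proof (cases "p = \<infinity>")
  case True
  have bd: "bdd_above (range (\<lambda>i. \<bar>f i\<bar>))"
    using M True by (simp add: lp_member_def bounded_imp_bdd_above)
  have "\<bar>f i\<bar> \<le> C" for i
    using cSUP_upper[OF _ bd, of i] le True by (simp add: lp_norm_def)
  then show ?thesis using True by (auto simp: Bnd_def intro: order_trans[OF abs_ge_zero])
next
  case False
  define q where "q = real_of_ereal p"
  have q: "1 \<le> q" using q_ge1[OF hp False] q_def by simp
  have sm: "summable (\<lambda>i. \<bar>f i\<bar> powr q)" using M False by (simp add: lp_member_def q_def)
  have S0: "0 \<le> (\<Sum>i. \<bar>f i\<bar> powr q)" by (rule suminf_nonneg[OF sm]) simp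
  have N: "lp_norm p f = (\<Sum>i. \<bar>f i\<bar> powr q) powr (1/q)" using False by (simp add: lp_norm_def q_def)
  have N0: "0 \<le> lp_norm p f" using N by simp
  have "(\<Sum>i. \<bar>f i\<bar> powr q) = lp_norm p f powr q" using N S0 q by (simp add: powr_powr)
  also have "\<dots> \<le> C powr q" by (rule powr_mono2) (use q N0 le in auto)
  finally have "(\<Sum>i<K. \<bar>f i\<bar> powr q) \<le> C powr q" for K
    using sum_le_suminf[OF sm, of "{..<K}"] by auto
  then show ?thesis using False N0 le by (auto simp: Bnd_def q_def)
qed

lemma lp_Bnd: "1 \<le> p \<Longrightarrow> lp_member p f \<Longrightarrow> Bnd p (lp_norm p f) f"
  by (rule imp_Bnd) auto

lemma lp_norm_nonneg: "1 \<le> p \<Longrightarrow> lp_member p f \<Longrightarrow> 0 \<le> lp_norm p f"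
  using lp_Bnd Bnd_def by blast



lemma powr_cvx:
  fixes u v t q :: real
  assumes "0 \<le> u" "0 \<le> v" "0 \<le> t" "t \<le> 1" "1 \<le> q"
  shows "(t * u + (1 - t) * v) powr q \<le> t * u powr q + (1 - t) * v powr q"
proof -
  have tq: "t powr q \<le> t" if "0 \<le> t" "t \<le> 1" for t :: real
    using powr_mono'[of 1 q t] that assms(5) by simp
  show ?thesis
  proof (cases "u = 0 \<or> v = 0")
    case True
    then show ?thesis
    proof
      assume u: "u = 0"
      have "((1 - t) * v) powr q = (1 - t) powr q * v powr q"
        using assms by (simp add: powr_mult)
      also have "\<dots> \<le> (1 - t) * v powr q"
        by (rule mult_right_mono) (use tq[of "1-t"] assms in auto)
      finally show ?thesis using u assms by simp
    next
      assume v: "v = 0"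
      have "(t * u) powr q = t powr q * u powr q"
        using assms by (simp add: powr_mult)
      also have "\<dots> \<le> t * u powr q"
        by (rule mult_right_mono) (use tq[of "t"] assms in auto)
      finally show ?thesis using v assms by simp
    qed
  next
    case False
    then have "u \<in> {0<..}" "v \<in> {0<..}" using assms by auto
    from convex_onD[OF powr_convex[OF assms(5)] _ _ this(2) this(1), of t] assms
    show ?thesis by (simp add: algebra_simps)
  qed
qed

lemma powr_cancel:
  fixes x y q :: real
  assumes "0 \<le> x" "0 \<le> y" "0 < q" "x powr q \<le> y powr q"
  shows "x \<le> y"
proof (rule ccontr)
  assume "\<not> x \<le> y"
  then have "y powr q < x powr q" using powr_less_mono2[of q y x] assms by auto
  then show False using assms by simp
qed

lemma Bnd_mono:
  assumes "Bnd p C g" "\<And>i. \<bar>f i\<bar> \<le> \<bar>g i\<bar>" and hp: "1 \<le> p"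
  shows "Bnd p C f"
proof (cases "p = \<infinity>")
  case True then show ?thesis using assms by (auto simp: Bnd_def intro: order_trans)
next
  case False
  have "(\<Sum>i<K. \<bar>f i\<bar> powr real_of_ereal p) \<le> (\<Sum>i<K. \<bar>g i\<bar> powr real_of_ereal p)" for K
    by (rule sum_mono) (rule powr_mono2, use assms(2) q_ge1[OF hp False] in auto)
  then show ?thesis using False assms(1) unfolding Bnd_def by (auto intro: order_trans)
qed

lemma Bnd_scale:
  assumes hp: "1 \<le> p" and B: "Bnd p C f"
  shows "Bnd p (\<bar>c\<bar> * C) (\<lambda>i. c * f i)"
proof (cases "p = \<infinity>")
  case True then show ?thesis using B by (auto simp: Bnd_def abs_mult intro: mult_left_mono)
next
  case False
  define q where "q = real_of_ereal p"
  have q: "1 \<le> q" using q_ge1[OF hp False] q_def by simp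
  have C: "0 \<le> C" "\<And>K. (\<Sum>i<K. \<bar>f i\<bar> powr q) \<le> C powr q" using B False by (auto simp: Bnd_def q_def)
  have "(\<Sum>i<K. \<bar>c * f i\<bar> powr q) = \<bar>c\<bar> powr q * (\<Sum>i<K. \<bar>f i\<bar> powr q)" for K
    by (simp add: abs_mult powr_mult sum_distrib_left)
  also have "\<bar>c\<bar> powr q * (\<Sum>i<K. \<bar>f i\<bar> powr q) \<le> \<bar>c\<bar> powr q * C powr q" for K
    by (rule mult_left_mono) (auto simp: C)
  also have "\<bar>c\<bar> powr q * C powr q = (\<bar>c\<bar> * C) powr q" using C by (simp add: powr_mult)
  finally show ?thesis using False C by (auto simp: Bnd_def q_def)
qed

lemma Bnd_add:
  assumes hp: "1 \<le> p" and BA: "Bnd p A f" and BB: "Bnd p B g"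
  shows "Bnd p (A + B) (\<lambda>i. f i + g i)"
proof (cases "p = \<infinity>")
  case True then show ?thesis using BA BB
    by (auto simp: Bnd_def intro: order_trans[OF abs_triangle_ineq] add_mono)
next
  case False
  define q where "q = real_of_ereal p"
  have q: "1 \<le> q" using q_ge1[OF hp False] q_def by simp
  have A: "0 \<le> A" "\<And>K. (\<Sum>i<K. \<bar>f i\<bar> powr q) \<le> A powr q" using BA False by (auto simp: Bnd_def q_def)
  have B: "0 \<le> B" "\<And>K. (\<Sum>i<K. \<bar>g i\<bar> powr q) \<le> B powr q" using BB False by (auto simp: Bnd_def q_def)
  have zero: "h i = 0" if "\<And>K. (\<Sum>i<K. \<bar>h i\<bar> powr q) \<le> 0 powr q" for h :: "nat \<Rightarrow> real" and i
  proof -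
    have "\<bar>h i\<bar> powr q \<le> (\<Sum>j<Suc i. \<bar>h j\<bar> powr q)"
      by (rule member_le_sum) auto
    also have "\<dots> \<le> 0" using that[of "Suc i"] by simp
    finally show ?thesis using powr_eq_0_iff[of "\<bar>h i\<bar>" q] by (simp add: order_antisym)
  qed
  have main: "(\<Sum>i<K. \<bar>f i + g i\<bar> powr q) \<le> (A + B) powr q" for K
  proof (cases "A = 0 \<or> B = 0")
    case True
    then show ?thesis
    proof
      assume "A = 0" then have "\<And>i. f i = 0" using zero A by metis
      then show ?thesis using B \<open>A = 0\<close> by simp
    next
      assume "B = 0" then have "\<And>i. g i = 0" using zero B by metis
      then show ?thesis using A \<open>B = 0\<close> by simp
    qed
  next
    case False
    then have Ap: "0 < A" and Bp: "0 < B" using A B by auto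
    define t where "t = A / (A + B)"
    have t: "0 \<le> t" "t \<le> 1" "1 - t = B / (A + B)" using Ap Bp by (auto simp: t_def field_simps)
    have pt: "\<bar>f i + g i\<bar> powr q \<le> (A + B) powr q *
        (t * (\<bar>f i\<bar> / A) powr q + (1 - t) * (\<bar>g i\<bar> / B) powr q)" for i
    proof -
      have "(A + B) * (t * (\<bar>f i\<bar> / A) + (1 - t) * (\<bar>g i\<bar> / B)) = \<bar>f i\<bar> + \<bar>g i\<bar>"
      proof -
        have e1: "(A + B) * (t * (\<bar>f i\<bar> / A)) = \<bar>f i\<bar>" using Ap Bp by (simp add: t_def)
        have e2: "(A + B) * ((1 - t) * (\<bar>g i\<bar> / B)) = \<bar>g i\<bar>" unfolding t(3) using Ap Bp by simp
        show ?thesis using e1 e2 by (simp add: distrib_left)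
      qed
      then have "\<bar>f i + g i\<bar> \<le> (A + B) * (t * (\<bar>f i\<bar> / A) + (1 - t) * (\<bar>g i\<bar> / B))"
        using abs_triangle_ineq by simp
      then have "\<bar>f i + g i\<bar> powr q \<le> ((A + B) * (t * (\<bar>f i\<bar> / A) + (1 - t) * (\<bar>g i\<bar> / B))) powr q"
        using powr_mono2[of q "\<bar>f i + g i\<bar>"] q by simp
      also have "\<dots> = (A + B) powr q * (t * (\<bar>f i\<bar> / A) + (1 - t) * (\<bar>g i\<bar> / B)) powr q"
        using Ap Bp t by (simp add: powr_mult)
      also have "\<dots> \<le> (A + B) powr q * (t * (\<bar>f i\<bar> / A) powr q + (1 - t) * (\<bar>g i\<bar> / B) powr q)"
        by (rule mult_left_mono[OF powr_cvx]) (use Ap Bp t q in auto)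
      finally show ?thesis .
    qed
    have "(\<Sum>i<K. \<bar>f i + g i\<bar> powr q) \<le> (A + B) powr q *
        (t * (\<Sum>i<K. (\<bar>f i\<bar> / A) powr q) + (1 - t) * (\<Sum>i<K. (\<bar>g i\<bar> / B) powr q))"
    proof -
      have "(\<Sum>i<K. \<bar>f i + g i\<bar> powr q) \<le> (\<Sum>i<K. (A + B) powr q *
        (t * (\<bar>f i\<bar> / A) powr q + (1 - t) * (\<bar>g i\<bar> / B) powr q))"
        by (rule sum_mono[OF pt])
      also have "\<dots> = (A + B) powr q *
        (t * (\<Sum>i<K. (\<bar>f i\<bar> / A) powr q) + (1 - t) * (\<Sum>i<K. (\<bar>g i\<bar> / B) powr q))"
        by (simp add: sum_distrib_left[symmetric] sum.distrib)
      finally show ?thesis .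
    qed
    moreover have "(\<Sum>i<K. (\<bar>f i\<bar> / A) powr q) \<le> 1"
    proof -
      have "(\<Sum>i<K. (\<bar>f i\<bar> / A) powr q) = (\<Sum>i<K. \<bar>f i\<bar> powr q) / A powr q"
        using Ap by (simp add: powr_divide sum_divide_distrib)
      then show ?thesis using A(2)[of K] Ap by simp
    qed
    moreover have "(\<Sum>i<K. (\<bar>g i\<bar> / B) powr q) \<le> 1"
    proof -
      have "(\<Sum>i<K. (\<bar>g i\<bar> / B) powr q) = (\<Sum>i<K. \<bar>g i\<bar> powr q) / B powr q"
        using Bp by (simp add: powr_divide sum_divide_distrib)
      then show ?thesis using B(2)[of K] Bp by simp
    qed
    ultimately show ?thesis
    proof -
      assume h: "(\<Sum>i<K. \<bar>f i + g i\<bar> powr q) \<le> (A + B) powr q *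
        (t * (\<Sum>i<K. (\<bar>f i\<bar> / A) powr q) + (1 - t) * (\<Sum>i<K. (\<bar>g i\<bar> / B) powr q))"
        "(\<Sum>i<K. (\<bar>f i\<bar> / A) powr q) \<le> 1" "(\<Sum>i<K. (\<bar>g i\<bar> / B) powr q) \<le> 1"
      have "t * (\<Sum>i<K. (\<bar>f i\<bar> / A) powr q) + (1 - t) * (\<Sum>i<K. (\<bar>g i\<bar> / B) powr q) \<le> t * 1 + (1 - t) * 1"
        by (intro add_mono mult_left_mono h(2,3)) (use t(1,2) in auto)
      then have "(A + B) powr q * (t * (\<Sum>i<K. (\<bar>f i\<bar> / A) powr q) + (1 - t) * (\<Sum>i<K. (\<bar>g i\<bar> / B) powr q)) \<le> (A + B) powr q"
        using mult_left_mono[of _ "t * 1 + (1 - t) * 1" "(A + B) powr q"] by simp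
      then show ?thesis using h(1) by linarith
    qed
  qed
  show ?thesis using main A B False by (auto simp: Bnd_def q_def)
qed

lemma Bnd_coord:
  assumes hp: "1 \<le> p" and B: "Bnd p C f"
  shows "\<bar>f i\<bar> \<le> C"
proof (cases "p = \<infinity>")
  case True then show ?thesis using B by (auto simp: Bnd_def)
next
  case False
  define q where "q = real_of_ereal p"
  have q: "1 \<le> q" using q_ge1[OF hp False] q_def by simp
  have C: "0 \<le> C" "\<And>K. (\<Sum>i<K. \<bar>f i\<bar> powr q) \<le> C powr q" using B False by (auto simp: Bnd_def q_def)
  have "\<bar>f i\<bar> powr q \<le> (\<Sum>j<Suc i. \<bar>f j\<bar> powr q)" by (rule member_le_sum) auto
  also have "\<dots> \<le> C powr q" by (rule C)
  finally show ?thesis using powr_cancel[of "\<bar>f i\<bar>" C q] q C by auto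
qed

lemma sum_shift_le:
  fixes g :: "nat \<Rightarrow> real"
  assumes "g 0 = 0" "\<And>i. 0 \<le> g i"
  shows "(\<Sum>i<K. g (i - j)) \<le> (\<Sum>i<K. g i)"
proof -
  have "(\<Sum>i<K. g (i - j)) \<le> (\<Sum>i<K + j. g (i - j))"
    by (rule sum_mono2) (auto simp: assms)
  also have "{..<K + j} = {..<j} \<union> {j..<K + j}" by auto
  also have "(\<Sum>i\<in>{..<j} \<union> {j..<K + j}. g (i - j)) = (\<Sum>i<j. g (i - j)) + (\<Sum>i\<in>{j..<K + j}. g (i - j))"
    by (rule sum.union_disjoint) auto
  also have "(\<Sum>i<j. g (i - j)) = 0" using assms(1) by simp
  also have "(\<Sum>i\<in>{j..<K + j}. g (i - j)) = (\<Sum>i\<in>{0..<K}. g i)"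
    using sum.shift_bounds_nat_ivl[of "\<lambda>i. g (i - j)" 0 j K] by (simp add: add.commute)
  finally show ?thesis by (simp add: atLeast0LessThan)
qed

lemma Bnd_shift:
  assumes hp: "1 \<le> p" and B: "Bnd p C f" and f0: "f 0 = 0"
  shows "Bnd p C (\<lambda>i. f (i - j))"
proof (cases "p = \<infinity>")
  case True then show ?thesis using B by (auto simp: Bnd_def)
next
  case False
  define q where "q = real_of_ereal p"
  have q: "1 \<le> q" using q_ge1[OF hp False] q_def by simp
  have C: "0 \<le> C" "\<And>K. (\<Sum>i<K. \<bar>f i\<bar> powr q) \<le> C powr q" using B False by (auto simp: Bnd_def q_def)
  have "(\<Sum>i<K. \<bar>f (i - j)\<bar> powr q) \<le> C powr q" for K
    using sum_shift_le[where g="\<lambda>i. \<bar>f i\<bar> powr q" and K=K and j=j] f0 C(2)[of K] by simp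
  then show ?thesis using False C by (auto simp: Bnd_def q_def)
qed

lemma Bnd_lim:
  assumes hp: "1 \<le> p" and lim: "\<And>i. (\<lambda>m. g m i) \<longlonglongrightarrow> h i"
    and ev: "\<And>m. m \<ge> N \<Longrightarrow> Bnd p C (g m)"
  shows "Bnd p C h"
proof -
  have C: "0 \<le> C" using ev[of N] by (simp add: Bnd_def)
  show ?thesis
  proof (cases "p = \<infinity>")
    case True
    have "\<bar>h i\<bar> \<le> C" for i
    proof (rule tendsto_le[OF sequentially_bot _ tendsto_rabs[OF lim[of i]]])
      show "(\<lambda>m. C) \<longlonglongrightarrow> C" by simp
      show "\<forall>\<^sub>F m in sequentially. \<bar>g m i\<bar> \<le> C"
        using ev True by (auto simp: Bnd_def eventually_sequentially)
    qed
    then show ?thesis using True C by (auto simp: Bnd_def)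
  next
    case False
    define q where "q = real_of_ereal p"
    have q: "1 \<le> q" using q_ge1[OF hp False] q_def by simp
    have "(\<Sum>i<K. \<bar>h i\<bar> powr q) \<le> C powr q" for K
    proof (rule tendsto_le[OF sequentially_bot])
      show "(\<lambda>m. C powr q) \<longlonglongrightarrow> C powr q" by simp
      show "(\<lambda>m. \<Sum>i<K. \<bar>g m i\<bar> powr q) \<longlonglongrightarrow> (\<Sum>i<K. \<bar>h i\<bar> powr q)"
        by (intro tendsto_sum tendsto_powr' tendsto_rabs lim) (use q in auto)
      show "\<forall>\<^sub>F m in sequentially. (\<Sum>i<K. \<bar>g m i\<bar> powr q) \<le> C powr q"
        using ev False by (auto simp: Bnd_def eventually_sequentially q_def)
    qed
    then show ?thesis using False C by (auto simp: Bnd_def q_def)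
  qed
qed

lemma Bnd_zero: "Bnd p 0 (\<lambda>i. 0)"
  by (auto simp: Bnd_def)

lemma Bnd_fin:
  assumes hp: "1 \<le> p" and z: "\<And>i. i > m \<Longrightarrow> f i = 0"
  shows "\<exists>C. Bnd p C f"
proof (cases "p = \<infinity>")
  case True
  have "\<bar>f i\<bar> \<le> (\<Sum>j\<le>m. \<bar>f j\<bar>)" for i
  proof (cases "i \<le> m")
    case True then show ?thesis by (intro member_le_sum) auto
  next
    case False then show ?thesis using z[of i] by (simp add: sum_nonneg)
  qed
  then show ?thesis using True by (auto simp: Bnd_def intro!: exI[of _ "\<Sum>j\<le>m. \<bar>f j\<bar>"] sum_nonneg)
next
  case False
  define q where "q = real_of_ereal p"
  have q: "1 \<le> q" using q_ge1[OF hp False] q_def by simp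
  define S where "S = (\<Sum>j<Suc m. \<bar>f j\<bar> powr q)"
  have S0: "0 \<le> S" unfolding S_def by (simp add: sum_nonneg)
  have "(\<Sum>i<K. \<bar>f i\<bar> powr q) \<le> S" for K
  proof (cases "K \<le> Suc m")
    case True then show ?thesis unfolding S_def by (intro sum_mono2) auto
  next
    case False
    have "(\<Sum>i<K. \<bar>f i\<bar> powr q) = S" unfolding S_def
      by (rule sum.mono_neutral_left[symmetric]) (use False z in auto)
    then show ?thesis by simp
  qed
  moreover have "(S powr (1/q)) powr q = S" using S0 q by (simp add: powr_powr)
  ultimately show ?thesis using False
    by (auto simp: Bnd_def q_def intro!: exI[of _ "S powr (1/q)"])
qed

lemma lp_add:
  assumes hp: "1 \<le> p" and "lp_member p f" "lp_member p g"
  shows "lp_member p (\<lambda>i. f i + g i) \<and> lp_norm p (\<lambda>i. f i + g i) \<le> lp_norm p f + lp_norm p g"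
  by (rule Bnd_imp[OF hp Bnd_add[OF hp lp_Bnd lp_Bnd]]) (use assms in auto)

lemma lp_scale:
  assumes hp: "1 \<le> p" and "lp_member p f"
  shows "lp_member p (\<lambda>i. c * f i) \<and> lp_norm p (\<lambda>i. c * f i) \<le> \<bar>c\<bar> * lp_norm p f"
  by (rule Bnd_imp[OF hp Bnd_scale[OF hp lp_Bnd]]) (use assms in auto)

lemma lp_scale_eq:
  assumes hp: "1 \<le> p" and f: "lp_member p f"
  shows "lp_norm p (\<lambda>i. c * f i) = \<bar>c\<bar> * lp_norm p f"
proof (cases "c = 0")
  case True
  have "lp_norm p (\<lambda>i. 0) \<le> 0" using Bnd_imp[OF hp Bnd_zero] by auto
  moreover have "0 \<le> lp_norm p (\<lambda>i. 0)" using lp_norm_nonneg[OF hp] Bnd_imp[OF hp Bnd_zero] by blast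
  ultimately show ?thesis using True by simp
next
  case False
  have 1: "lp_member p (\<lambda>i. c * f i)" "lp_norm p (\<lambda>i. c * f i) \<le> \<bar>c\<bar> * lp_norm p f"
    using lp_scale[OF hp f] by auto
  have "lp_norm p (\<lambda>i. (1/c) * (c * f i)) \<le> \<bar>1/c\<bar> * lp_norm p (\<lambda>i. c * f i)"
    using lp_scale[OF hp 1(1)] by blast
  then have "lp_norm p f \<le> lp_norm p (\<lambda>i. c * f i) / \<bar>c\<bar>" using False by simp
  then have "\<bar>c\<bar> * lp_norm p f \<le> lp_norm p (\<lambda>i. c * f i)" using False by (simp add: field_simps)
  then show ?thesis using 1 by simp
qed

lemma lp_mono:
  assumes hp: "1 \<le> p" and "lp_member p g" "\<And>i. \<bar>f i\<bar> \<le> \<bar>g i\<bar>"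
  shows "lp_member p f \<and> lp_norm p f \<le> lp_norm p g"
  by (rule Bnd_imp[OF hp Bnd_mono[OF lp_Bnd]]) (use assms in auto)

lemma lp_diff:
  assumes hp: "1 \<le> p" and f: "lp_member p f" and g: "lp_member p g"
  shows "lp_member p (\<lambda>i. f i - g i) \<and> lp_norm p (\<lambda>i. f i - g i) \<le> lp_norm p f + lp_norm p g"
proof -
  have g': "lp_member p (\<lambda>i. (-1) * g i)" "lp_norm p (\<lambda>i. (-1) * g i) = lp_norm p g"
    using lp_scale[OF hp g, of "-1"] lp_scale_eq[OF hp g, of "-1"] by auto
  show ?thesis using lp_add[OF hp f g'(1)] g'(2) by simp
qed

lemma lp_diff_sym:
  assumes hp: "1 \<le> p" and f: "lp_member p f" and g: "lp_member p g"
  shows "lp_norm p (\<lambda>i. g i - f i) = lp_norm p (\<lambda>i. f i - g i)"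
proof -
  have "lp_norm p (\<lambda>i. (-1) * (f i - g i)) = lp_norm p (\<lambda>i. f i - g i)"
    using lp_scale_eq[OF hp conjunct1[OF lp_diff[OF hp f g]], of "-1"] by simp
  then show ?thesis by simp
qed

lemma lp_coord: "1 \<le> p \<Longrightarrow> lp_member p f \<Longrightarrow> \<bar>f i\<bar> \<le> lp_norm p f"
  using Bnd_coord lp_Bnd by blast

lemma lp_shift:
  assumes hp: "1 \<le> p" and "lp_member p f" "f 0 = 0"
  shows "lp_member p (\<lambda>i. f (i - j)) \<and> lp_norm p (\<lambda>i. f (i - j)) \<le> lp_norm p f"
  by (rule Bnd_imp[OF hp Bnd_shift[OF hp lp_Bnd]]) (use assms in auto)

lemma lp_fin:
  assumes hp: "1 \<le> p" and "\<And>i. i > m \<Longrightarrow> f i = 0"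
  shows "lp_member p f"
proof -
  have "\<exists>C. Bnd p C f" by (rule Bnd_fin[OF hp]) (rule assms(2))
  then obtain C where "Bnd p C f" by blast
  then show ?thesis using Bnd_imp[OF hp] by blast
qed

lemma lp_zero: "1 \<le> p \<Longrightarrow> lp_member p (\<lambda>i. 0) \<and> lp_norm p (\<lambda>i. 0) = 0"
  using lp_scale_eq[of p "\<lambda>i. 0" 0] Bnd_imp[OF _ Bnd_zero, of p] by auto

lemma lp_sum:
  assumes hp: "1 \<le> p" and J: "finite J" and F: "\<And>j. j \<in> J \<Longrightarrow> lp_member p (F j)"
  shows "lp_member p (\<lambda>i. \<Sum>j\<in>J. F j i) \<and> lp_norm p (\<lambda>i. \<Sum>j\<in>J. F j i) \<le> (\<Sum>j\<in>J. lp_norm p (F j))"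
  using J F
proof (induction J rule: finite_induct)
  case empty then show ?case using lp_zero[OF hp] by simp
next
  case (insert a J)
  have IH: "lp_member p (\<lambda>i. \<Sum>j\<in>J. F j i)" "lp_norm p (\<lambda>i. \<Sum>j\<in>J. F j i) \<le> (\<Sum>j\<in>J. lp_norm p (F j))"
    using insert by auto
  have "lp_member p (\<lambda>i. F a i + (\<Sum>j\<in>J. F j i)) \<and>
     lp_norm p (\<lambda>i. F a i + (\<Sum>j\<in>J. F j i)) \<le> lp_norm p (F a) + lp_norm p (\<lambda>i. \<Sum>j\<in>J. F j i)"
    by (rule lp_add[OF hp]) (use insert IH in auto)
  then show ?case using insert IH by auto
qed

lemma lp_complete:
  assumes hp: "1 \<le> p" and g: "\<And>n. lp_member p (g n)"
    and sm: "summable (\<lambda>n. lp_norm p (\<lambda>i. g (Suc n) i - g n i))"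
  shows "\<exists>y. lp_member p y \<and> (\<lambda>n. lp_norm p (\<lambda>i. g n i - y i)) \<longlonglongrightarrow> 0"
proof -
  define d where "d n = lp_norm p (\<lambda>i. g (Suc n) i - g n i)" for n
  have d0: "0 \<le> d n" for n unfolding d_def
    using lp_norm_nonneg[OF hp] lp_diff[OF hp g g] by blast
  have smd: "summable d" using sm by (simp add: d_def[abs_def])
  define T where "T n = suminf d - (\<Sum>k<n. d k)" for n
  have T0: "T \<longlonglongrightarrow> 0"
  proof -
    have "(\<lambda>n. suminf d - (\<Sum>k<n. d k)) \<longlonglongrightarrow> suminf d - suminf d"
      by (intro tendsto_diff tendsto_const summable_LIMSEQ smd)
    then show ?thesis by (simp add: T_def[abs_def])
  qed
  have tele: "lp_member p (\<lambda>i. g m i - g n i) \<and> lp_norm p (\<lambda>i. g m i - g n i) \<le> (\<Sum>k\<in>{n..<m}. d k)"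
    if "n \<le> m" for m n
    using that
  proof (induction m rule: dec_induct)
    case base
    then show ?case using lp_zero[OF hp] by simp
  next
    case (step m)
    have e: "(\<lambda>i. g (Suc m) i - g n i) = (\<lambda>i. (g (Suc m) i - g m i) + (g m i - g n i))" by auto
    have "lp_member p (\<lambda>i. (g (Suc m) i - g m i) + (g m i - g n i)) \<and>
      lp_norm p (\<lambda>i. (g (Suc m) i - g m i) + (g m i - g n i)) \<le> d m + lp_norm p (\<lambda>i. g m i - g n i)"
      unfolding d_def by (rule lp_add[OF hp]) (use lp_diff[OF hp g g] step in auto)
    then show ?case unfolding e using step \<open>n \<le> m\<close> by (simp add: add.commute)
  qed
  have sT: "(\<Sum>k\<in>{n..<m}. d k) \<le> T n" if "n \<le> m" for m n
  proof -
    have "(\<Sum>k<m. d k) = (\<Sum>k<n. d k) + (\<Sum>k\<in>{n..<m}. d k)"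
      using sum.atLeastLessThan_concat[of 0 n m d] that by (simp add: lessThan_atLeast0)
    moreover have "(\<Sum>k<m. d k) \<le> suminf d" by (rule sum_le_suminf[OF smd]) (auto simp: d0)
    ultimately show ?thesis by (simp add: T_def)
  qed
  have pw: "\<bar>g m i - g n i\<bar> \<le> T n" if "n \<le> m" for m n i
    using lp_coord[OF hp conjunct1[OF tele[OF that]], of i] tele[OF that] sT[OF that] by linarith
  have conv: "convergent (\<lambda>m. g m i)" for i
  proof -
    have "Cauchy (\<lambda>m. g m i)"
    proof (rule CauchyI)
      fix e :: real assume "0 < e"
      then obtain M where M: "\<And>n. n \<ge> M \<Longrightarrow> \<bar>T n\<bar> < e"
        using T0 unfolding LIMSEQ_def dist_real_def by auto
      show "\<exists>M. \<forall>m\<ge>M. \<forall>n\<ge>M. norm (g m i - g n i) < e"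
      proof (intro exI allI impI)
        fix m n assume "M \<le> m" "M \<le> n"
        show "norm (g m i - g n i) < e"
        proof (cases "n \<le> m")
          case True then show ?thesis using pw[OF True, of i] M[OF \<open>M \<le> n\<close>] by simp
        next
          case False then have "m \<le> n" by simp
          then show ?thesis using pw[OF \<open>m \<le> n\<close>, of i] M[OF \<open>M \<le> m\<close>] by simp
        qed
      qed
    qed
    then show ?thesis by (simp add: Cauchy_convergent_iff)
  qed
  define y where "y i = lim (\<lambda>m. g m i)" for i
  have lim: "(\<lambda>m. g m i) \<longlonglongrightarrow> y i" for i
    using conv[of i] by (simp add: y_def convergent_LIMSEQ_iff)
  have By: "Bnd p (T n) (\<lambda>i. y i - g n i)" for n
  proof (rule Bnd_lim[OF hp _ imp_Bnd[OF hp]])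
    show "(\<lambda>m. g m i - g n i) \<longlonglongrightarrow> y i - g n i" for i by (intro tendsto_intros lim)
    show "lp_member p (\<lambda>i. g m i - g n i)" if "n \<le> m" for m using tele[OF that] by blast
    show "lp_norm p (\<lambda>i. g m i - g n i) \<le> T n" if "n \<le> m" for m using tele[OF that] sT[OF that] by linarith
  qed
  have yn: "lp_member p (\<lambda>i. y i - g n i) \<and> lp_norm p (\<lambda>i. y i - g n i) \<le> T n" for n
    using Bnd_imp[OF hp By] .
  have ym: "lp_member p y"
  proof -
    have "lp_member p (\<lambda>i. (y i - g 0 i) + g 0 i)" using lp_add[OF hp conjunct1[OF yn] g] by blast
    then show ?thesis by simp
  qed
  have le: "lp_norm p (\<lambda>i. g n i - y i) \<le> T n" for n
    using lp_diff_sym[OF hp g ym, of n] yn[of n] by simp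
  have ge: "0 \<le> lp_norm p (\<lambda>i. g n i - y i)" for n
    using lp_norm_nonneg[OF hp] lp_diff[OF hp g ym] by blast
  have "(\<lambda>n. lp_norm p (\<lambda>i. g n i - y i)) \<longlonglongrightarrow> 0"
    by (rule tendsto_sandwich[OF _ _ tendsto_const T0]) (auto simp: le ge)
  then show ?thesis using ym by blast
qed



lemma relu_nonneg: "0 \<le> relu t" by (simp add: relu_def)
lemma relu_lip: "\<bar>relu u - relu v\<bar> \<le> \<bar>u - v\<bar>" by (simp add: relu_def max_def)

lemma cnn_supp:
  assumes "i = 0 \<or> width d s n < i"
  shows "cnn d s w b x n i = 0"
  using assms by (cases n) (auto simp: restrict_vec_def)

lemma cnn_nonneg:
  assumes "\<forall>i\<in>{1..d}. 0 \<le> x i \<and> x i \<le> 1"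
  shows "0 \<le> cnn d s w b x n i"
  using assms by (cases n) (auto simp: restrict_vec_def relu_nonneg)

lemma cnn_lp: "1 \<le> p \<Longrightarrow> lp_member p (cnn d s w b x n)"
  by (rule lp_fin[where m="width d s n"]) (auto intro: cnn_supp)

lemma conv_eq:
  assumes f: "\<And>i. i = 0 \<or> m < i \<Longrightarrow> f i = 0" and i: "1 \<le> i" "i \<le> m + s"
  shows "conv m f s w i = (\<Sum>j\<le>s. w j * f (i - j))"
proof -
  have "conv m f s w i = (\<Sum>j\<in>{i - m .. min (i - 1) s}. w j * f (i - j))"
    using i by (simp add: conv_def)
  also have "\<dots> = (\<Sum>j\<le>s. w j * f (i - j))"
  proof (rule sum.mono_neutral_left)
    show "\<forall>j\<in>{..s} - {i - m..min (i - 1) s}. w j * f (i - j) = 0"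
    proof
      fix j assume j: "j \<in> {..s} - {i - m..min (i - 1) s}"
      then have "j < i - m \<or> j > i - 1" by auto
      then have "i - j = 0 \<or> m < i - j" by auto
      then show "w j * f (i - j) = 0" using f by simp
    qed
  qed auto
  finally show ?thesis .
qed

lemma step_bound:
  assumes x: "\<forall>i\<in>{1..d}. 0 \<le> x i \<and> x i \<le> 1" and a: "0 < w (Suc n) 0"
  shows "\<bar>cnn d s w b x (Suc n) i - w (Suc n) 0 * cnn d s w b x n i\<bar> \<le>
    (\<Sum>j\<in>{1..s (Suc n)}. \<bar>w (Suc n) j\<bar> * cnn d s w b x n (i - j))
      + \<bar>restrict_vec (width d s (Suc n)) (b (Suc n)) i\<bar>"
  (is "?L \<le> ?R")
proof -
  let ?X = "cnn d s w b x n"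
  have Xnn: "\<And>i. 0 \<le> ?X i" using cnn_nonneg[OF x] by blast
  have R0: "0 \<le> ?R" using Xnn by (intro add_nonneg_nonneg sum_nonneg mult_nonneg_nonneg) auto
  show ?thesis
  proof (cases "1 \<le> i \<and> i \<le> width d s (Suc n)")
    case True
    have cv: "conv (width d s n) ?X (s (Suc n)) (w (Suc n)) i = (\<Sum>j\<le>s (Suc n). w (Suc n) j * ?X (i - j))"
      by (rule conv_eq) (use True cnn_supp in auto)
    have split: "(\<Sum>j\<le>s (Suc n). w (Suc n) j * ?X (i - j)) =
        w (Suc n) 0 * ?X i + (\<Sum>j\<in>{1..s (Suc n)}. w (Suc n) j * ?X (i - j))"
    proof -
      have "{..s (Suc n)} = insert 0 {1..s (Suc n)}" by auto
      then show ?thesis by simp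
    qed
    have ra: "w (Suc n) 0 * ?X i = relu (w (Suc n) 0 * ?X i)"
      using a Xnn[of i] by (simp add: relu_def)
    have "?L = \<bar>relu (w (Suc n) 0 * ?X i + (\<Sum>j\<in>{1..s (Suc n)}. w (Suc n) j * ?X (i - j)) + b (Suc n) i)
               - relu (w (Suc n) 0 * ?X i)\<bar>"
    proof -
      have "?L = \<bar>relu (w (Suc n) 0 * ?X i + (\<Sum>j\<in>{1..s (Suc n)}. w (Suc n) j * ?X (i - j)) + b (Suc n) i)
               - w (Suc n) 0 * ?X i\<bar>"
        using True by (simp add: restrict_vec_def cv split)
      then show ?thesis using ra by simp
    qed
    also have "\<dots> \<le> \<bar>(w (Suc n) 0 * ?X i + (\<Sum>j\<in>{1..s (Suc n)}. w (Suc n) j * ?X (i - j)) + b (Suc n) i)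
               - w (Suc n) 0 * ?X i\<bar>"
      by (rule relu_lip)
    also have "\<dots> = \<bar>(\<Sum>j\<in>{1..s (Suc n)}. w (Suc n) j * ?X (i - j)) + b (Suc n) i\<bar>"
      by simp
    also have "\<dots> \<le> \<bar>\<Sum>j\<in>{1..s (Suc n)}. w (Suc n) j * ?X (i - j)\<bar> + \<bar>b (Suc n) i\<bar>"
      by (rule abs_triangle_ineq)
    also have "\<bar>\<Sum>j\<in>{1..s (Suc n)}. w (Suc n) j * ?X (i - j)\<bar> \<le> (\<Sum>j\<in>{1..s (Suc n)}. \<bar>w (Suc n) j\<bar> * ?X (i - j))"
      using sum_abs[of "\<lambda>j. w (Suc n) j * ?X (i - j)" "{1..s (Suc n)}"] Xnn by (simp add: abs_mult)
    finally show ?thesis using True by (simp add: restrict_vec_def)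
  next
    case False
    then have "i = 0 \<or> width d s (Suc n) < i" by auto
    moreover then have "i = 0 \<or> width d s n < i" by auto
    ultimately have "?L = 0" using cnn_supp[of i d s "Suc n"] cnn_supp[of i d s n] by simp
    then show ?thesis using R0 by simp
  qed
qed

lemma step_norm:
  assumes hp: "1 \<le> p" and x: "\<forall>i\<in>{1..d}. 0 \<le> x i \<and> x i \<le> 1" and a: "0 < w (Suc n) 0"
  shows "lp_member p (\<lambda>i. cnn d s w b x (Suc n) i - w (Suc n) 0 * cnn d s w b x n i) \<and>
     lp_norm p (\<lambda>i. cnn d s w b x (Suc n) i - w (Suc n) 0 * cnn d s w b x n i) \<le>
     (\<Sum>j\<in>{1..s (Suc n)}. \<bar>w (Suc n) j\<bar>) * lp_norm p (cnn d s w b x n)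
     + lp_norm p (restrict_vec (width d s (Suc n)) (b (Suc n)))"
proof -
  let ?X = "cnn d s w b x n"
  let ?r = "restrict_vec (width d s (Suc n)) (b (Suc n))"
  let ?J = "{1..s (Suc n)}"
  have X: "lp_member p ?X" by (rule cnn_lp[OF hp])
  have X0: "?X 0 = 0" by (rule cnn_supp) simp
  have Xnn: "\<And>i. 0 \<le> ?X i" using cnn_nonneg[OF x] by blast
  have F: "lp_member p (\<lambda>i. \<bar>w (Suc n) j\<bar> * ?X (i - j)) \<and>
      lp_norm p (\<lambda>i. \<bar>w (Suc n) j\<bar> * ?X (i - j)) \<le> \<bar>w (Suc n) j\<bar> * lp_norm p ?X" for j
  proof -
    have sh: "lp_member p (\<lambda>i. ?X (i - j))" "lp_norm p (\<lambda>i. ?X (i - j)) \<le> lp_norm p ?X"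
      using lp_shift[OF hp X X0] by auto
    have "lp_member p (\<lambda>i. \<bar>w (Suc n) j\<bar> * ?X (i - j))"
      "lp_norm p (\<lambda>i. \<bar>w (Suc n) j\<bar> * ?X (i - j)) = \<bar>w (Suc n) j\<bar> * lp_norm p (\<lambda>i. ?X (i - j))"
      using lp_scale[OF hp sh(1)] lp_scale_eq[OF hp sh(1)] by auto
    then show ?thesis using sh(2) by (simp add: mult_left_mono)
  qed
  have SP: "lp_member p (\<lambda>i. \<Sum>j\<in>?J. \<bar>w (Suc n) j\<bar> * ?X (i - j)) \<and>
      lp_norm p (\<lambda>i. \<Sum>j\<in>?J. \<bar>w (Suc n) j\<bar> * ?X (i - j)) \<le> (\<Sum>j\<in>?J. \<bar>w (Suc n) j\<bar>) * lp_norm p ?X"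
  proof -
    have "lp_member p (\<lambda>i. \<Sum>j\<in>?J. \<bar>w (Suc n) j\<bar> * ?X (i - j)) \<and>
      lp_norm p (\<lambda>i. \<Sum>j\<in>?J. \<bar>w (Suc n) j\<bar> * ?X (i - j)) \<le> (\<Sum>j\<in>?J. lp_norm p (\<lambda>i. \<bar>w (Suc n) j\<bar> * ?X (i - j)))"
      by (rule lp_sum[OF hp]) (use F in auto)
    moreover have "(\<Sum>j\<in>?J. lp_norm p (\<lambda>i. \<bar>w (Suc n) j\<bar> * ?X (i - j))) \<le> (\<Sum>j\<in>?J. \<bar>w (Suc n) j\<bar> * lp_norm p ?X)"
      by (rule sum_mono) (use F in blast)
    ultimately show ?thesis by (simp add: sum_distrib_right)
  qed
  have r: "lp_member p ?r" by (rule lp_fin[OF hp, where m="width d s (Suc n)"]) (simp add: restrict_vec_def)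
  have ra: "lp_member p (\<lambda>i. \<bar>?r i\<bar>) \<and> lp_norm p (\<lambda>i. \<bar>?r i\<bar>) \<le> lp_norm p ?r"
    by (rule lp_mono[OF hp r]) simp
  define G where "G i = (\<Sum>j\<in>?J. \<bar>w (Suc n) j\<bar> * ?X (i - j)) + \<bar>?r i\<bar>" for i
  have G: "lp_member p G \<and> lp_norm p G \<le> (\<Sum>j\<in>?J. \<bar>w (Suc n) j\<bar>) * lp_norm p ?X + lp_norm p ?r"
    using lp_add[OF hp conjunct1[OF SP] conjunct1[OF ra]] SP ra unfolding G_def[abs_def] by linarith
  have G0: "0 \<le> G i" for i unfolding G_def using Xnn by (intro add_nonneg_nonneg sum_nonneg mult_nonneg_nonneg) auto
  have "\<bar>cnn d s w b x (Suc n) i - w (Suc n) 0 * ?X i\<bar> \<le> \<bar>G i\<bar>" for i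
    using step_bound[of d x w n s b i, OF x a] G0[of i] unfolding G_def by simp
  then have "lp_member p (\<lambda>i. cnn d s w b x (Suc n) i - w (Suc n) 0 * ?X i) \<and>
     lp_norm p (\<lambda>i. cnn d s w b x (Suc n) i - w (Suc n) 0 * ?X i) \<le> lp_norm p G"
    by (intro lp_mono[OF hp conjunct1[OF G]])
  then show ?thesis using G by linarith
qed

lemma gronwall:
  fixes u \<rho> \<gamma> :: "nat \<Rightarrow> real"
  assumes u0: "\<And>k. 0 \<le> u k" and st: "\<And>k. u (Suc k) \<le> u k * (1 + \<rho> k) + \<gamma> k"
    and r0: "\<And>k. 0 \<le> \<rho> k" and g0: "\<And>k. 0 \<le> \<gamma> k" and rs: "summable \<rho>" and gs: "summable \<gamma>"
  shows "\<exists>M. \<forall>k. u k \<le> M"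
proof -
  have ind: "u k \<le> (u 0 + (\<Sum>j<k. \<gamma> j)) * exp (\<Sum>j<k. \<rho> j)" for k
  proof (induction k)
    case 0 then show ?case by simp
  next
    case (Suc k)
    let ?G = "u 0 + (\<Sum>j<k. \<gamma> j)" and ?R = "\<Sum>j<k. \<rho> j"
    have G0: "0 \<le> ?G" using u0 g0 by (simp add: sum_nonneg)
    have e1: "1 \<le> exp (?R + \<rho> k)" using r0 by (simp add: sum_nonneg)
    have "u (Suc k) \<le> u k * (1 + \<rho> k) + \<gamma> k" by (rule st)
    also have "\<dots> \<le> ?G * exp ?R * (1 + \<rho> k) + \<gamma> k"
      by (rule add_right_mono, rule mult_right_mono[OF Suc]) (use r0 in auto)
    also have "\<dots> \<le> ?G * exp ?R * exp (\<rho> k) + \<gamma> k * exp (?R + \<rho> k)"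
    proof (rule add_mono)
      show "?G * exp ?R * (1 + \<rho> k) \<le> ?G * exp ?R * exp (\<rho> k)"
        by (rule mult_left_mono) (use G0 exp_ge_add_one_self[of "\<rho> k"] in auto)
      show "\<gamma> k \<le> \<gamma> k * exp (?R + \<rho> k)"
        using mult_left_mono[OF e1 g0[of k]] by simp
    qed
    also have "\<dots> = (u 0 + (\<Sum>j<Suc k. \<gamma> j)) * exp (\<Sum>j<Suc k. \<rho> j)"
      by (simp add: exp_add algebra_simps)
    finally show ?case .
  qed
  have "u k \<le> (u 0 + suminf \<gamma>) * exp (suminf \<rho>)" for k
  proof -
    have "(u 0 + (\<Sum>j<k. \<gamma> j)) * exp (\<Sum>j<k. \<rho> j) \<le> (u 0 + suminf \<gamma>) * exp (suminf \<rho>)"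
    proof (intro mult_mono add_left_mono)
      show "(\<Sum>j<k. \<gamma> j) \<le> suminf \<gamma>" by (rule sum_le_suminf[OF gs]) (use g0 in auto)
      have "(\<Sum>j<k. \<rho> j) \<le> suminf \<rho>" by (rule sum_le_suminf[OF rs]) (use r0 in auto)
      then show "exp (\<Sum>j<k. \<rho> j) \<le> exp (suminf \<rho>)" by simp
      show "0 \<le> u 0 + suminf \<gamma>" using u0[of 0] suminf_nonneg[OF gs g0] by simp
    qed simp
    then show ?thesis using ind[of k] by linarith
  qed
  then show ?thesis by blast
qed



theorem theorem6p2:
  fixes p :: ereal and d :: nat and s :: "nat \<Rightarrow> nat"
    and w :: "nat \<Rightarrow> nat \<Rightarrow> real" and b :: "nat \<Rightarrow> nat \<Rightarrow> real"
  assumes hp: "1 \<le> p"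
    and hb: "summable (\<lambda>n. lp_norm p (restrict_vec (width d s (Suc n)) (b (Suc n))))"
    and hprod: "\<exists>L. L \<noteq> 0 \<and> (\<lambda>N. \<Prod>n\<in>{1..N}. w n 0) \<longlonglongrightarrow> L"
    and hw: "summable (\<lambda>n. (\<Sum>j\<in>{1..s (Suc n)}. \<bar>w (Suc n) j\<bar>) / \<bar>w (Suc n) 0\<bar>)"
  shows "\<forall>x :: nat \<Rightarrow> real. (\<forall>i\<in>{1..d}. 0 \<le> x i \<and> x i \<le> 1) \<longrightarrow>
           (\<exists>y. lp_member p y \<and>
                (\<lambda>n. lp_norm p (\<lambda>i. cnn d s w b x n i - y i)) \<longlonglongrightarrow> 0)"
proof (intro allI impI)
  fix x :: "nat \<Rightarrow> real"
  assume x: "\<forall>i\<in>{1..d}. 0 \<le> x i \<and> x i \<le> 1"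
  define X where "X = cnn d s w b x"
  define P where "P N = (\<Prod>n\<in>{1..N}. w n 0)" for N
  obtain L where L: "L \<noteq> 0" "P \<longlonglongrightarrow> L" using hprod unfolding P_def[abs_def] by blast
  have "0 < \<bar>L\<bar> / 3" using L by simp
  from LIMSEQ_D[OF L(2) this] obtain N where N: "\<And>n. n \<ge> N \<Longrightarrow> \<bar>P n - L\<bar> < \<bar>L\<bar> / 3"
    by auto
  define N0 where "N0 = Suc N"
  have N0: "N \<le> N0" "1 \<le> N0" by (auto simp: N0_def)
  have PL: "0 < P n * L" if "n \<ge> N0" for n
  proof -
    have h: "\<bar>P n - L\<bar> < \<bar>L\<bar> / 3" using N[OF order_trans[OF N0(1) that]] .
    have "\<bar>(P n - L) * L\<bar> = \<bar>P n - L\<bar> * \<bar>L\<bar>" by (simp add: abs_mult)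
    also have "\<dots> \<le> \<bar>L\<bar> / 3 * \<bar>L\<bar>" using h by (intro mult_right_mono) auto
    finally have "- ((P n - L) * L) \<le> \<bar>L\<bar> / 3 * \<bar>L\<bar>" by linarith
    moreover have "L * L = \<bar>L\<bar> * \<bar>L\<bar>" by (simp add: abs_mult[symmetric])
    moreover have "0 < \<bar>L\<bar> * \<bar>L\<bar>" using L(1) by (intro mult_pos_pos) auto
    moreover have "P n * L = L * L + (P n - L) * L" by (simp add: algebra_simps)
    ultimately show ?thesis by linarith
  qed
  have Pabs: "2 * \<bar>L\<bar> / 3 < \<bar>P n\<bar> \<and> \<bar>P n\<bar> < 4 * \<bar>L\<bar> / 3" if "n \<ge> N0" for n
    using N[OF order_trans[OF N0(1) that]] by linarith
  define Q where "Q n = P n / P N0" for n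
  have Qpos: "0 < Q n" if "n \<ge> N0" for n
  proof -
    have "0 < (P n * L) * (P N0 * L)" using PL[OF that] PL[of N0] by simp
    moreover have "(P n * L) * (P N0 * L) = (P n * P N0) * (L * L)" by (simp add: algebra_simps)
    moreover have "0 < L * L" using L(1) not_real_square_gt_zero by blast
    ultimately have "0 < P n * P N0" by (simp add: zero_less_mult_iff)
    then show ?thesis unfolding Q_def by (simp add: zero_less_divide_iff zero_less_mult_iff)
  qed
  have Qb: "1/2 \<le> Q n \<and> Q n \<le> 2" if "n \<ge> N0" for n
  proof -
    have "Q n = \<bar>Q n\<bar>" using Qpos[OF that] by simp
    also have "\<bar>Q n\<bar> = \<bar>P n\<bar> / \<bar>P N0\<bar>" unfolding Q_def by (rule abs_divide)
    finally have e: "Q n = \<bar>P n\<bar> / \<bar>P N0\<bar>" .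
    have c: "0 < \<bar>P N0\<bar>" using Pabs[of N0] L by auto
    have "(1/2) * \<bar>P N0\<bar> \<le> \<bar>P n\<bar>" "\<bar>P n\<bar> \<le> 2 * \<bar>P N0\<bar>" using Pabs[OF that] Pabs[of N0] by linarith+
    then show ?thesis unfolding e using pos_le_divide_eq[OF c] pos_divide_le_eq[OF c] by blast
  qed
  have Prec: "P (Suc n) = w (Suc n) 0 * P n" for n
    unfolding P_def by (rule prod.nat_ivl_Suc') simp
  have arec: "Q (Suc n) = w (Suc n) 0 * Q n" for n
    unfolding Q_def Prec by simp
  have aeq: "w (Suc n) 0 = Q (Suc n) / Q n" if "n \<ge> N0" for n
    using arec[of n] Qpos[OF that] by (simp add: eq_divide_eq)
  have apos: "0 < w (Suc n) 0" if "n \<ge> N0" for n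
    unfolding aeq[OF that] using Qpos[OF that] Qpos[of "Suc n"] that by (intro divide_pos_pos) auto
  have a4: "w (Suc n) 0 \<le> 4" if "n \<ge> N0" for n
  proof -
    have "Q (Suc n) \<le> 4 * Q n" using Qb[OF that] Qb[of "Suc n"] that by linarith
    then show ?thesis unfolding aeq[OF that] using pos_divide_le_eq[OF Qpos[OF that]] by simp
  qed
  define L2 where "L2 = L / P N0"
  have PN0: "P N0 \<noteq> 0" using PL[of N0] by auto
  have QL: "Q \<longlonglongrightarrow> L2" unfolding Q_def[abs_def] L2_def by (intro tendsto_divide L(2) tendsto_const PN0)
  define S where "S n = (\<Sum>j\<in>{1..s (Suc n)}. \<bar>w (Suc n) j\<bar>)" for n
  define \<beta> where "\<beta> n = lp_norm p (restrict_vec (width d s (Suc n)) (b (Suc n)))" for n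
  have S0: "0 \<le> S n" for n unfolding S_def by (simp add: sum_nonneg)
  have \<beta>0: "0 \<le> \<beta> n" for n unfolding \<beta>_def
    by (rule lp_norm_nonneg[OF hp], rule lp_fin[OF hp, where m="width d s (Suc n)"]) (simp add: restrict_vec_def)
  have Ssum: "summable (\<lambda>k. S (k + N0))"
  proof (rule summable_comparison_test[where g="\<lambda>k. 4 * (S (k + N0) / \<bar>w (Suc (k + N0)) 0\<bar>)"])
    show "summable (\<lambda>k. 4 * (S (k + N0) / \<bar>w (Suc (k + N0)) 0\<bar>))"
      using summable_mult[OF summable_ignore_initial_segment[OF hw, of N0], of 4] by (simp add: S_def)
    show "\<exists>N. \<forall>k\<ge>N. norm (S (k + N0)) \<le> 4 * (S (k + N0) / \<bar>w (Suc (k + N0)) 0\<bar>)"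
    proof (intro exI allI impI)
      fix k :: nat
      have ap: "0 < w (Suc (k + N0)) 0" "w (Suc (k + N0)) 0 \<le> 4" using apos a4 by auto
      have "S (k + N0) = w (Suc (k + N0)) 0 * (S (k + N0) / w (Suc (k + N0)) 0)" using ap by simp
      also have "\<dots> \<le> 4 * (S (k + N0) / w (Suc (k + N0)) 0)"
        by (rule mult_right_mono) (use ap S0 in auto)
      finally show "norm (S (k + N0)) \<le> 4 * (S (k + N0) / \<bar>w (Suc (k + N0)) 0\<bar>)" using ap S0 by simp
    qed
  qed
  have \<beta>sum: "summable (\<lambda>k. \<beta> (k + N0))"
    using summable_ignore_initial_segment[OF hb, of N0] by (simp add: \<beta>_def)
  have Xm: "lp_member p (X n)" for n unfolding X_def by (rule cnn_lp[OF hp])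
  define Z where "Z k = (\<lambda>i. (1 / Q (k + N0)) * X (k + N0) i)" for k
  have Zm: "lp_member p (Z k)" for k unfolding Z_def using lp_scale[OF hp Xm] by blast
  have Zn: "lp_norm p (X (k + N0)) = Q (k + N0) * lp_norm p (Z k)" for k
    unfolding Z_def using lp_scale_eq[OF hp Xm, of "1 / Q (k + N0)" "k + N0"] Qpos[of "k + N0"] by simp
  define E where "E k = (\<lambda>i. X (Suc (k + N0)) i - w (Suc (k + N0)) 0 * X (k + N0) i)" for k
  have Eb: "lp_member p (E k) \<and> lp_norm p (E k) \<le> S (k + N0) * lp_norm p (X (k + N0)) + \<beta> (k + N0)" for k
    unfolding E_def X_def S_def \<beta>_def
    by (rule step_norm[of p d x w "k + N0" s b, OF hp x apos]) simp
  have Zd: "(\<lambda>i. Z (Suc k) i - Z k i) = (\<lambda>i. (1 / Q (Suc (k + N0))) * E k i)" for k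
  proof
    fix i
    have q: "0 < Q (k + N0)" "0 < w (Suc (k + N0)) 0" using Qpos apos by auto
    have e: "1 / Q (k + N0) = w (Suc (k + N0)) 0 / Q (Suc (k + N0))" using q arec[of "k + N0"] by simp
    have "Z (Suc k) i - Z k i = (1 / Q (Suc (k + N0))) * X (Suc (k + N0)) i - (w (Suc (k + N0)) 0 / Q (Suc (k + N0))) * X (k + N0) i"
      unfolding Z_def e by simp
    also have "\<dots> = (1 / Q (Suc (k + N0))) * E k i" unfolding E_def by (simp add: algebra_simps)
    finally show "Z (Suc k) i - Z k i = (1 / Q (Suc (k + N0))) * E k i" .
  qed
  have Zdn: "lp_norm p (\<lambda>i. Z (Suc k) i - Z k i) \<le> 2 * lp_norm p (E k)" for k
  proof -
    have "lp_norm p (\<lambda>i. Z (Suc k) i - Z k i) = (1 / Q (Suc (k + N0))) * lp_norm p (E k)"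
      unfolding Zd using lp_scale_eq[OF hp conjunct1[OF Eb], of "1 / Q (Suc (k + N0))" k] Qpos[of "Suc (k + N0)"] by simp
    also have "\<dots> \<le> 2 * lp_norm p (E k)"
    proof (rule mult_right_mono)
      show "1 / Q (Suc (k + N0)) \<le> 2" using Qb[of "Suc (k + N0)"] by (simp add: field_simps)
      show "0 \<le> lp_norm p (E k)" using lp_norm_nonneg[OF hp] Eb by blast
    qed
    finally show ?thesis .
  qed
  define u where "u k = lp_norm p (Z k)" for k
  have u0: "0 \<le> u k" for k unfolding u_def by (rule lp_norm_nonneg[OF hp Zm])
  have Xu: "lp_norm p (X (k + N0)) \<le> 2 * u k" for k
    using Zn[of k] Qb[of "k + N0"] u0[of k] unfolding u_def by (simp add: mult_right_mono)
  have Ek: "lp_norm p (E k) \<le> 2 * S (k + N0) * u k + \<beta> (k + N0)" for k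
  proof -
    have "S (k + N0) * lp_norm p (X (k + N0)) \<le> S (k + N0) * (2 * u k)"
      by (rule mult_left_mono[OF Xu S0])
    then show ?thesis using Eb[of k] by simp
  qed
  have ust: "u (Suc k) \<le> u k * (1 + 4 * S (k + N0)) + 2 * \<beta> (k + N0)" for k
  proof -
    have "(\<lambda>i. Z (Suc k) i) = (\<lambda>i. Z k i + (Z (Suc k) i - Z k i))" by simp
    then have "u (Suc k) \<le> u k + lp_norm p (\<lambda>i. Z (Suc k) i - Z k i)"
      using lp_add[OF hp Zm conjunct1[OF lp_diff[OF hp Zm Zm]], of k "Suc k" k] unfolding u_def by simp
    then show ?thesis using Zdn[of k] Ek[of k] by (simp add: algebra_simps)
  qed
  obtain M where M: "\<And>k. u k \<le> M"
    using gronwall[of u "\<lambda>k. 4 * S (k + N0)" "\<lambda>k. 2 * \<beta> (k + N0)", OF u0 ust]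
      S0 \<beta>0 summable_mult[OF Ssum, of 4] summable_mult[OF \<beta>sum, of 2] by auto
  have dsum: "summable (\<lambda>k. lp_norm p (\<lambda>i. Z (Suc k) i - Z k i))"
  proof (rule summable_comparison_test[where g="\<lambda>k. 2 * (2 * S (k + N0) * M + \<beta> (k + N0))"])
    show "summable (\<lambda>k. 2 * (2 * S (k + N0) * M + \<beta> (k + N0)))"
      by (intro summable_mult summable_add summable_mult2 Ssum \<beta>sum)
    show "\<exists>N. \<forall>k\<ge>N. norm (lp_norm p (\<lambda>i. Z (Suc k) i - Z k i)) \<le> 2 * (2 * S (k + N0) * M + \<beta> (k + N0))"
    proof (intro exI allI impI)
      fix k :: nat
      have nn: "0 \<le> lp_norm p (\<lambda>i. Z (Suc k) i - Z k i)" using lp_norm_nonneg[OF hp] lp_diff[OF hp Zm Zm] by blast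
      have "2 * S (k + N0) * u k \<le> 2 * S (k + N0) * M" using M[of k] S0[of "k + N0"] by (simp add: mult_left_mono)
      then show "norm (lp_norm p (\<lambda>i. Z (Suc k) i - Z k i)) \<le> 2 * (2 * S (k + N0) * M + \<beta> (k + N0))"
        using nn Zdn[of k] Ek[of k] by simp
    qed
  qed
  obtain y0 where y0: "lp_member p y0" "(\<lambda>k. lp_norm p (\<lambda>i. Z k i - y0 i)) \<longlonglongrightarrow> 0"
    using lp_complete[OF hp Zm dsum] by blast
  define y where "y i = L2 * y0 i" for i
  have ym: "lp_member p y" unfolding y_def[abs_def] using lp_scale[OF hp y0(1)] by blast
  have bnd: "lp_norm p (\<lambda>i. X (k + N0) i - y i) \<le> 2 * lp_norm p (\<lambda>i. Z k i - y0 i) + \<bar>Q (k + N0) - L2\<bar> * lp_norm p y0"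
    for k
  proof -
    have D: "lp_member p (\<lambda>i. Z k i - y0 i)" using lp_diff[OF hp Zm y0(1)] by blast
    have e: "(\<lambda>i. X (k + N0) i - y i) = (\<lambda>i. Q (k + N0) * (Z k i - y0 i) + (Q (k + N0) - L2) * y0 i)"
      using Qpos[of "k + N0"] by (auto simp: Z_def y_def algebra_simps)
    have "lp_norm p (\<lambda>i. Q (k + N0) * (Z k i - y0 i) + (Q (k + N0) - L2) * y0 i) \<le>
        lp_norm p (\<lambda>i. Q (k + N0) * (Z k i - y0 i)) + lp_norm p (\<lambda>i. (Q (k + N0) - L2) * y0 i)"
      using lp_add[OF hp conjunct1[OF lp_scale[OF hp D]] conjunct1[OF lp_scale[OF hp y0(1)]]] by blast
    also have "\<dots> = Q (k + N0) * lp_norm p (\<lambda>i. Z k i - y0 i) + \<bar>Q (k + N0) - L2\<bar> * lp_norm p y0"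
      using lp_scale_eq[OF hp D] lp_scale_eq[OF hp y0(1)] Qpos[of "k + N0"] by simp
    also have "\<dots> \<le> 2 * lp_norm p (\<lambda>i. Z k i - y0 i) + \<bar>Q (k + N0) - L2\<bar> * lp_norm p y0"
      using Qb[of "k + N0"] lp_norm_nonneg[OF hp D] by (simp add: mult_right_mono)
    finally show ?thesis unfolding e .
  qed
  have lo: "0 \<le> lp_norm p (\<lambda>i. X (k + N0) i - y i)" for k
    using lp_norm_nonneg[OF hp] lp_diff[OF hp Xm ym] by blast
  have up: "(\<lambda>k. 2 * lp_norm p (\<lambda>i. Z k i - y0 i) + \<bar>Q (k + N0) - L2\<bar> * lp_norm p y0) \<longlonglongrightarrow> 0"
  proof -
    have "(\<lambda>k. Q (k + N0)) \<longlonglongrightarrow> L2" using LIMSEQ_ignore_initial_segment[OF QL] .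
    then have "(\<lambda>k. \<bar>Q (k + N0) - L2\<bar>) \<longlonglongrightarrow> 0"
      by (intro tendsto_rabs_zero LIM_zero)
    then have "(\<lambda>k. 2 * lp_norm p (\<lambda>i. Z k i - y0 i) + \<bar>Q (k + N0) - L2\<bar> * lp_norm p y0) \<longlonglongrightarrow> 2 * 0 + 0 * lp_norm p y0"
      by (intro tendsto_intros y0(2))
    then show ?thesis by simp
  qed
  have "(\<lambda>k. lp_norm p (\<lambda>i. X (k + N0) i - y i)) \<longlonglongrightarrow> 0"
    by (rule tendsto_sandwich[OF _ _ tendsto_const up]) (auto simp: lo bnd)
  then have "(\<lambda>n. lp_norm p (\<lambda>i. X n i - y i)) \<longlonglongrightarrow> 0" by (rule LIMSEQ_offset)
  then show "\<exists>y. lp_member p y \<and> (\<lambda>n. lp_norm p (\<lambda>i. cnn d s w b x n i - y i)) \<longlonglongrightarrow> 0"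
    using ym unfolding X_def by blast
qed


end
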